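(* Let $\mathbb X,\mathbb Y$ be Euclidean spaces, $\Phi\colon\mathbb X\rightrightarrows\mathbb Y$ with closed graph, $(\bar x,\bar y)\in\operatorname{gph}\Phi$, $u\in\mathbb S_{\mathbb X}$. If $\Phi$ is quasi-normal in direction $u$ at $(\bar x,\bar y)$ with respect to some orthonormal basis $\mathcal E=\{e_1,\dots,e_m\}$ of $\mathbb Y$, then $\Phi$ is strongly asymptotically regular at $(\bar x,\bar y)$ in direction $u$ and metrically subregular at $(\bar x,\bar y)$ in direction $u$.
   Context: $\widehat D^*\Phi(x,y)(y^* )=\{x^*\mid(x^*,-y^* )\in\widehat{\mathcal N}_{\operatorname{gph}\Phi}(x,y)\}$ (regular coderivative); $D^*\Phi((\bar x,\bar y);(u,v))(y^* )=\{x^*\mid(x^*,-y^* )\in\mathcal N_{\operatorname{gph}\Phi}((\bar x,\bar y);(u,v))\}$ with the directional limiting normal cone ($\eta\in\mathcal N_Q(z;w)$ iff there are $w_k\to w$, $t_k\downarrow0$, $\eta_k\to\eta$, $\eta_k\in\widehat{\mathcal N}_Q(z+t_kw_k)$); $\ker\Psi=\{y^*\mid0\in\Psi(y^* )\}$, $\operatorname{Im}\Psi=\bigcup\Psi(y^* )$. Quasi-normality in direction $u$ w.r.t. $\mathcal E$: there is no nonzero $\lambda\in\ker D^*\Phi((\bar x,\bar y);(u,0))$ for which there exist $(x_k,y_k)\in\operatorname{gph}\Phi$ with $x_k\ne\bar x$, $\lambda_k\in\mathbb Y$, $\eta_k\in\mathbb X$ such that $x_k\to\bar x$, $y_k\to\bar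 y$, $\lambda_k\to\lambda$, $\eta_k\to0$, $\frac{x_k-\bar x}{\|x_k-\bar x\|}\to u$, $\frac{y_k-\bar y}{\|x_k-\bar x\|}\to0$, and for all $k$ and $i$: $\eta_k\in\widehat D^*\Phi(x_k,y_k)(\lambda_k)$ and $\langle\lambda,e_i\rangle\langle y_k-\bar y,e_i\rangle>0$ whenever $\langle\lambda,e_i\rangle\ne0$. Strong asymptotic regularity in direction $u$: for all $(x_k,y_k)\in\operatorname{gph}\Phi$, $x_k^*$, $\lambda_k$, $x^*$, $y^*$ with $x_k\notin\Phi^{-1}(\bar y)$, $y_k\neq\bar y$, $x_k^*\in\widehat D^*\Phi(x_k,y_k)(\lambda_k)$ and $x_k\to\bar x$, $y_k\to\bar y$, $x_k^*\to x^*$, $\frac{x_k-\bar x}{\|x_k-\bar x\|}\to u$, $\frac{y_k-\bar y}{\|x_k-\bar x\|}\to0$, $\frac{\|y_k-\bar y\|}{\|x_k-\bar x\|}\lambda_k\to y^*$, $\|\lambda_k\|\to\infty$, $\frac{y_k-\bar y}{\|y_k-\bar y\|}-\frac{\lambda_k}{\|\lambda_k\|}\to0$, one has $x^*\in\operatorname{Im}D^*\Phi((\bar x,\bar y);(u,0))$. Metric subregularity in direction $u$: there are $\varepsilon,\delta,\kappa>0$ with $\operatorname{dist}(x,\Phi^{-1}(\bar y))\le\kappa\operatorname{dist}(\bar y,\Phi(x))$ for all $x\in\bar x+\mathbb B_{\varepsilon,\delta}(u)$, $\mathbb B_{\varepsilon,\delta}(u)=\{w\mid\|\|w\|u-\|u\|w\|\le\delta\|u\|\|w\|,\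 \|w\|\le\varepsilon\}$. *)

theory Defs
  imports "HOL-Analysis.Analysis"
begin

definition gph :: "('a \<Rightarrow> 'b set) \<Rightarrow> ('a \<times> 'b) set" where
  "gph \<Phi> = {(x, y). y \<in> \<Phi> x}"

definition inv_image_sv :: "('a \<Rightarrow> 'b set) \<Rightarrow> 'b \<Rightarrow> 'a set" where
  "inv_image_sv \<Phi> y = {x. y \<in> \<Phi> x}"

definition reg_normal_cone :: "'a::euclidean_space set \<Rightarrow> 'a \<Rightarrow> 'a set" where
  "reg_normal_cone Q z = {\<eta>. z \<in> Q \<and>
     (\<forall>\<epsilon>>0. \<exists>\<delta>>0. \<forall>z'\<in>Q. norm (z' - z) < \<delta> \<longrightarrow> \<eta> \<bullet> (z' - z) \<le> \<epsilon> * norm (z' - z))}"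

definition dir_normal_cone :: "'a::euclidean_space set \<Rightarrow> 'a \<Rightarrow> 'a \<Rightarrow> 'a set" where
  "dir_normal_cone Q z w = {\<eta>. \<exists>wk tk \<eta>k.
     wk \<longlonglongrightarrow> w \<and> (\<forall>k. tk k > 0) \<and> tk \<longlonglongrightarrow> 0 \<and> \<eta>k \<longlonglongrightarrow> \<eta> \<and>
     (\<forall>k. \<eta>k k \<in> reg_normal_cone Q (z + tk k *\<^sub>R wk k))}"

definition reg_coderiv ::
  "('a::euclidean_space \<Rightarrow> 'b::euclidean_space set) \<Rightarrow> 'a \<Rightarrow> 'b \<Rightarrow> 'b \<Rightarrow> 'a set" where
  "reg_coderiv \<Phi> x y ystar = {xstar. (xstar, - ystar) \<in> reg_normal_cone (gph \<Phi>) (x, y)}"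

definition dir_coderiv ::
  "('a::euclidean_space \<Rightarrow> 'b::euclidean_space set) \<Rightarrow> 'a \<Rightarrow> 'b \<Rightarrow> 'a \<Rightarrow> 'b \<Rightarrow> 'b \<Rightarrow> 'a set" where
  "dir_coderiv \<Phi> xb yb u v ystar = {xstar. (xstar, - ystar) \<in> dir_normal_cone (gph \<Phi>) (xb, yb) (u, v)}"

definition ker_sv :: "('b \<Rightarrow> 'a::zero set) \<Rightarrow> 'b set" where
  "ker_sv \<Psi> = {y. 0 \<in> \<Psi> y}"

definition Im_sv :: "('b \<Rightarrow> 'a set) \<Rightarrow> 'a set" where
  "Im_sv \<Psi> = (\<Union>y. \<Psi> y)"

definition orthonormal_basis :: "'b::euclidean_space set \<Rightarrow> bool" where
  "orthonormal_basis E \<longleftrightarrow> finite E \<and> pairwise orthogonal E \<and> (\<forall>e\<in>E. norm e = 1) \<and> span E = UNIV"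

definition quasi_normal_dir ::
  "('a::euclidean_space \<Rightarrow> 'b::euclidean_space set) \<Rightarrow> 'a \<Rightarrow> 'b \<Rightarrow> 'a \<Rightarrow> 'b set \<Rightarrow> bool" where
  "quasi_normal_dir \<Phi> xb yb u E \<longleftrightarrow>
    \<not> (\<exists>lam. lam \<noteq> 0 \<and> lam \<in> ker_sv (dir_coderiv \<Phi> xb yb u 0) \<and>
       (\<exists>x y lk \<eta>. (\<forall>k. (x k, y k) \<in> gph \<Phi> \<and> x k \<noteq> xb) \<and>
          x \<longlonglongrightarrow> xb \<and> y \<longlonglongrightarrow> yb \<and> lk \<longlonglongrightarrow> lam \<and> \<eta> \<longlonglongrightarrow> 0 \<and>
          (\<lambda>k. (x k - xb) /\<^sub>R norm (x k - xb)) \<longlonglongrightarrow> u \<and>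
          (\<lambda>k. (y k - yb) /\<^sub>R norm (x k - xb)) \<longlonglongrightarrow> 0 \<and>
          (\<forall>k. \<eta> k \<in> reg_coderiv \<Phi> (x k) (y k) (lk k) \<and>
               (\<forall>e\<in>E. lam \<bullet> e \<noteq> 0 \<longrightarrow> (lam \<bullet> e) * ((y k - yb) \<bullet> e) > 0))))"

definition strongly_asymp_regular_dir ::
  "('a::euclidean_space \<Rightarrow> 'b::euclidean_space set) \<Rightarrow> 'a \<Rightarrow> 'b \<Rightarrow> 'a \<Rightarrow> bool" where
  "strongly_asymp_regular_dir \<Phi> xb yb u \<longleftrightarrow>
    (\<forall>x y xs lk xstar ystar.
       (\<forall>k. (x k, y k) \<in> gph \<Phi> \<and> x k \<notin> inv_image_sv \<Phi> yb \<and> y k \<noteq> yb \<and>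
            xs k \<in> reg_coderiv \<Phi> (x k) (y k) (lk k)) \<and>
       x \<longlonglongrightarrow> xb \<and> y \<longlonglongrightarrow> yb \<and> xs \<longlonglongrightarrow> xstar \<and>
       (\<lambda>k. (x k - xb) /\<^sub>R norm (x k - xb)) \<longlonglongrightarrow> u \<and>
       (\<lambda>k. (y k - yb) /\<^sub>R norm (x k - xb)) \<longlonglongrightarrow> 0 \<and>
       (\<lambda>k. (norm (y k - yb) / norm (x k - xb)) *\<^sub>R lk k) \<longlonglongrightarrow> ystar \<and>
       filterlim (\<lambda>k. norm (lk k)) at_top sequentially \<and>
       (\<lambda>k. (y k - yb) /\<^sub>R norm (y k - yb) - lk k /\<^sub>R norm (lk k)) \<longlonglongrightarrow> 0
     \<longrightarrow> xstar \<in> Im_sv (dir_coderiv \<Phi> xb yb u 0))"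

definition dir_nbhd :: "real \<Rightarrow> real \<Rightarrow> 'a::real_normed_vector \<Rightarrow> 'a set" where
  "dir_nbhd \<epsilon> \<delta> u = {w. norm (norm w *\<^sub>R u - norm u *\<^sub>R w) \<le> \<delta> * norm u * norm w \<and> norm w \<le> \<epsilon>}"

text \<open>Directional metric subregularity; dist(yb, empty set) = +infinity, so points with
  empty image impose no constraint.\<close>
definition metric_subregular_dir ::
  "('a::euclidean_space \<Rightarrow> 'b::euclidean_space set) \<Rightarrow> 'a \<Rightarrow> 'b \<Rightarrow> 'a \<Rightarrow> bool" where
  "metric_subregular_dir \<Phi> xb yb u \<longleftrightarrow>
    (\<exists>\<epsilon>>0. \<exists>\<delta>>0. \<exists>\<kappa>>0. \<forall>x. x \<in> (\<lambda>w. xb + w) ` dir_nbhd \<epsilon> \<delta> u \<longrightarrow> \<Phi> x \<noteq> {} \<longrightarrow>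
        infdist x (inv_image_sv \<Phi> yb) \<le> \<kappa> * infdist yb (\<Phi> x))"

end

theory Submission
  imports Defs "HOL-Real_Asymp.Real_Asymp"
begin

lemma reg_normal_quad:
  fixes v :: "'a::euclidean_space"
  assumes "z \<in> Q" "C \<ge> 0" "\<And>z'. z' \<in> Q \<Longrightarrow> v \<bullet> (z' - z) \<le> C * (norm (z' - z))\<^sup>2"
  shows "v \<in> reg_normal_cone Q z"
  unfolding reg_normal_cone_def
proof (intro CollectI conjI allI impI)
  show "z \<in> Q" by fact
  fix \<epsilon> :: real assume e: "\<epsilon> > 0"
  show "\<exists>\<delta>>0. \<forall>z'\<in>Q. norm (z' - z) < \<delta> \<longrightarrow> v \<bullet> (z' - z) \<le> \<epsilon> * norm (z' - z)"
  proof (intro exI[of _ "\<epsilon> / (C + 1)"] conjI ballI impI)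
    show "\<epsilon> / (C + 1) > 0" using e assms(2) by simp
    fix z' assume z': "z' \<in> Q" and n: "norm (z' - z) < \<epsilon> / (C + 1)"
    have "C * norm (z' - z) \<le> (C + 1) * norm (z' - z)" by (simp add: distrib_right)
    also have "\<dots> \<le> \<epsilon>" using n assms(2) by (simp add: field_simps)
    finally have h: "C * norm (z' - z) \<le> \<epsilon>" .
    have "v \<bullet> (z' - z) \<le> C * (norm (z' - z))\<^sup>2" using assms(3) z' by blast
    also have "\<dots> = (C * norm (z' - z)) * norm (z' - z)" by (simp add: power2_eq_square)
    also have "\<dots> \<le> \<epsilon> * norm (z' - z)" using h by (simp add: mult_right_mono)
    finally show "v \<bullet> (z' - z) \<le> \<epsilon> * norm (z' - z)" .
  qed
qed

lemma reg_normal_scale: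
  fixes v :: "'a::euclidean_space"
  assumes "v \<in> reg_normal_cone Q z" "c > 0"
  shows "c *\<^sub>R v \<in> reg_normal_cone Q z"
  unfolding reg_normal_cone_def
proof (intro CollectI conjI allI impI)
  show "z \<in> Q" using assms(1) by (simp add: reg_normal_cone_def)
  fix \<epsilon> :: real assume e: "\<epsilon> > 0"
  then have "\<epsilon> / c > 0" using assms(2) by simp
  then obtain \<delta> where d: "\<delta> > 0" "\<forall>z'\<in>Q. norm (z' - z) < \<delta> \<longrightarrow> v \<bullet> (z' - z) \<le> (\<epsilon> / c) * norm (z' - z)"
    using assms(1) unfolding reg_normal_cone_def by blast
  show "\<exists>\<delta>>0. \<forall>z'\<in>Q. norm (z' - z) < \<delta> \<longrightarrow> (c *\<^sub>R v) \<bullet> (z' - z) \<le> \<epsilon> * norm (z' - z)"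
  proof (intro exI[of _ \<delta>] conjI ballI impI)
    show "\<delta> > 0" by fact
    fix z' assume "z' \<in> Q" "norm (z' - z) < \<delta>"
    then have "v \<bullet> (z' - z) \<le> (\<epsilon> / c) * norm (z' - z)" using d by blast
    then have "c * (v \<bullet> (z' - z)) \<le> \<epsilon> * norm (z' - z)"
      using assms(2) by (simp add: le_divide_eq mult.commute)
    then show "(c *\<^sub>R v) \<bullet> (z' - z) \<le> \<epsilon> * norm (z' - z)" using assms(2) by simp
  qed
qed

lemma bound_conv:
  fixes f :: "nat \<Rightarrow> 'a::real_normed_vector"
  assumes "\<And>k. norm (f k - L) \<le> g k" "g \<longlonglongrightarrow> 0"
  shows "f \<longlonglongrightarrow> L"
proof -
  have "(\<lambda>k. f k - L) \<longlonglongrightarrow> 0"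
    by (rule Lim_null_comparison[OF _ assms(2)]) (use assms(1) in auto)
  then show ?thesis using Lim_null by (simp add: LIM_zero_iff)
qed

lemma core_not_qn:
  fixes \<Phi> :: "'a::euclidean_space \<Rightarrow> 'b::euclidean_space set"
    and x :: "nat \<Rightarrow> 'a" and y l :: "nat \<Rightarrow> 'b" and \<eta> :: "nat \<Rightarrow> 'a"
  assumes fin: "finite E"
    and pts: "\<And>k. (x k, y k) \<in> gph \<Phi> \<and> x k \<noteq> xb \<and> y k \<noteq> yb"
    and nrm: "\<And>k. \<eta> k \<in> reg_coderiv \<Phi> (x k) (y k) (l k) \<and> norm (l k) = 1"
    and cx: "x \<longlonglongrightarrow> xb" and cy: "y \<longlonglongrightarrow> yb" and ce: "\<eta> \<longlonglongrightarrow> 0"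
    and cu: "(\<lambda>k. (x k - xb) /\<^sub>R norm (x k - xb)) \<longlonglongrightarrow> u"
    and cz: "(\<lambda>k. (y k - yb) /\<^sub>R norm (x k - xb)) \<longlonglongrightarrow> 0"
    and cl: "(\<lambda>k. l k - (y k - yb) /\<^sub>R norm (y k - yb)) \<longlonglongrightarrow> 0"
  shows "\<not> quasi_normal_dir \<Phi> xb yb u E"
proof -
  have "seq_compact (sphere (0::'b) 1)" by (rule compact_imp_seq_compact[OF compact_sphere])
  moreover have "\<forall>n. l n \<in> sphere 0 1" using nrm by simp
  ultimately obtain lam r where lam: "lam \<in> sphere 0 1" and r: "strict_mono r" "(l \<circ> r) \<longlonglongrightarrow> lam"
    unfolding seq_compact_def by blast
  have lam0: "lam \<noteq> 0" using lam by auto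
  define q where "q k = (y k - yb) /\<^sub>R norm (y k - yb)" for k
  have "(\<lambda>k. l (r k) - (l (r k) - q (r k))) \<longlonglongrightarrow> lam - 0"
    using r(2) LIMSEQ_subseq_LIMSEQ[OF cl r(1)] unfolding q_def
    by (intro tendsto_diff) (auto simp: o_def)
  then have cq: "(\<lambda>k. q (r k)) \<longlonglongrightarrow> lam" by simp
  have "\<forall>e\<in>E. eventually (\<lambda>k. lam \<bullet> e \<noteq> 0 \<longrightarrow> (lam \<bullet> e) * ((y (r k) - yb) \<bullet> e) > 0) sequentially"
  proof
    fix e assume "e \<in> E"
    show "eventually (\<lambda>k. lam \<bullet> e \<noteq> 0 \<longrightarrow> (lam \<bullet> e) * ((y (r k) - yb) \<bullet> e) > 0) sequentially"
    proof (cases "lam \<bullet> e = 0")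
      case True then show ?thesis by simp
    next
      case False
      have "(\<lambda>k. (lam \<bullet> e) * (q (r k) \<bullet> e)) \<longlonglongrightarrow> (lam \<bullet> e) * (lam \<bullet> e)"
        by (intro tendsto_mult tendsto_inner cq tendsto_const)
      moreover have "(lam \<bullet> e) * (lam \<bullet> e) > 0" using False by (simp add: not_square_less_zero less_le)
      ultimately have ev: "eventually (\<lambda>k. (lam \<bullet> e) * (q (r k) \<bullet> e) > 0) sequentially"
        using order_tendstoD(1) by blast
      show ?thesis
      proof (rule eventually_mono[OF ev], intro impI)
        fix k assume pos: "(lam \<bullet> e) * (q (r k) \<bullet> e) > 0"
        have ny: "norm (y (r k) - yb) > 0" using pts[of "r k"] by simp
        have eq: "(lam \<bullet> e) * ((y (r k) - yb) \<bullet> e) = norm (y (r k) - yb) * ((lam \<bullet> e) * (q (r k) \<bullet> e))"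
          using ny unfolding q_def by (simp add: inner_scaleR_left)
        have pos2: "norm (y (r k) - yb) * ((lam \<bullet> e) * (q (r k) \<bullet> e)) > 0"
          by (rule mult_pos_pos[OF ny pos])
        show "(lam \<bullet> e) * ((y (r k) - yb) \<bullet> e) > 0" by (subst eq) (rule pos2)
      qed
    qed
  qed
  then have "eventually (\<lambda>k. \<forall>e\<in>E. lam \<bullet> e \<noteq> 0 \<longrightarrow> (lam \<bullet> e) * ((y (r k) - yb) \<bullet> e) > 0) sequentially"
    by (rule eventually_ball_finite[OF fin])
  then obtain N where N: "\<And>k. k \<ge> N \<Longrightarrow> \<forall>e\<in>E. lam \<bullet> e \<noteq> 0 \<longrightarrow> (lam \<bullet> e) * ((y (r k) - yb) \<bullet> e) > 0"
    unfolding eventually_sequentially by blast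
  define s where "s k = r (k + N)" for k
  have s: "strict_mono s" using r(1) unfolding s_def strict_mono_def by simp
  have ls: "(l \<circ> s) \<longlonglongrightarrow> lam"
    using LIMSEQ_ignore_initial_segment[OF r(2), of N] unfolding s_def by (simp add: o_def)
  have sign: "\<forall>k. \<forall>e\<in>E. lam \<bullet> e \<noteq> 0 \<longrightarrow> (lam \<bullet> e) * (((y \<circ> s) k - yb) \<bullet> e) > 0"
    using N unfolding s_def by simp
  have cxs: "(x \<circ> s) \<longlonglongrightarrow> xb" using LIMSEQ_subseq_LIMSEQ[OF cx s] .
  have cys: "(y \<circ> s) \<longlonglongrightarrow> yb" using LIMSEQ_subseq_LIMSEQ[OF cy s] .
  have ces: "(\<eta> \<circ> s) \<longlonglongrightarrow> 0" using LIMSEQ_subseq_LIMSEQ[OF ce s] .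
  have cus: "(\<lambda>k. ((x \<circ> s) k - xb) /\<^sub>R norm ((x \<circ> s) k - xb)) \<longlonglongrightarrow> u"
    using LIMSEQ_subseq_LIMSEQ[OF cu s] by (simp add: o_def)
  have czs: "(\<lambda>k. ((y \<circ> s) k - yb) /\<^sub>R norm ((x \<circ> s) k - xb)) \<longlonglongrightarrow> 0"
    using LIMSEQ_subseq_LIMSEQ[OF cz s] by (simp add: o_def)
  have ker: "lam \<in> ker_sv (dir_coderiv \<Phi> xb yb u 0)"
  proof -
    define t where "t k = norm (x (s k) - xb)" for k
    define w where "w k = ((x (s k) - xb) /\<^sub>R t k, (y (s k) - yb) /\<^sub>R t k)" for k
    define nk where "nk k = (\<eta> (s k), - l (s k))" for k
    have tpos: "\<forall>k. t k > 0" using pts unfolding t_def by simp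
    have "(\<lambda>k. norm (x (s k) - xb)) \<longlonglongrightarrow> norm (xb - xb)"
      using cxs by (intro tendsto_norm tendsto_diff) (auto simp: o_def)
    then have ct: "t \<longlonglongrightarrow> 0" unfolding t_def by simp
    have cw: "w \<longlonglongrightarrow> (u, 0)" unfolding w_def t_def
      using cus czs by (intro tendsto_Pair) (auto simp: o_def)
    have cn: "nk \<longlonglongrightarrow> (0, - lam)" unfolding nk_def
      using ces ls by (intro tendsto_Pair tendsto_minus) (auto simp: o_def)
    have mem: "\<forall>k. nk k \<in> reg_normal_cone (gph \<Phi>) ((xb, yb) + t k *\<^sub>R w k)"
    proof
      fix k
      have "(xb, yb) + t k *\<^sub>R w k = (x (s k), y (s k))"
        using tpos[rule_format, of k] unfolding w_def by simp
      then show "nk k \<in> reg_normal_cone (gph \<Phi>) ((xb, yb) + t k *\<^sub>R w k)"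
        using nrm[of "s k"] unfolding nk_def reg_coderiv_def by simp
    qed
    have "(0, - lam) \<in> dir_normal_cone (gph \<Phi>) (xb, yb) (u, 0)"
      unfolding dir_normal_cone_def using cw tpos ct cn mem by blast
    then show ?thesis unfolding ker_sv_def dir_coderiv_def by simp
  qed
  show ?thesis unfolding quasi_normal_dir_def not_not
  proof (intro exI conjI)
    show "lam \<noteq> 0" by fact
    show "lam \<in> ker_sv (dir_coderiv \<Phi> xb yb u 0)" by fact
    show "\<forall>k. ((x \<circ> s) k, (y \<circ> s) k) \<in> gph \<Phi> \<and> (x \<circ> s) k \<noteq> xb" using pts by simp
    show "\<forall>k. (\<eta> \<circ> s) k \<in> reg_coderiv \<Phi> ((x \<circ> s) k) ((y \<circ> s) k) ((l \<circ> s) k) \<and>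
         (\<forall>e\<in>E. lam \<bullet> e \<noteq> 0 \<longrightarrow> (lam \<bullet> e) * (((y \<circ> s) k - yb) \<bullet> e) > 0)"
      using nrm sign by simp
  qed (fact cxs cys ls ces cus czs)+
qed

lemma sar_part:
  fixes \<Phi> :: "'a::euclidean_space \<Rightarrow> 'b::euclidean_space set"
  assumes gb: "(xb, yb) \<in> gph \<Phi>" and fin: "finite E"
    and qn: "quasi_normal_dir \<Phi> xb yb u E"
  shows "strongly_asymp_regular_dir \<Phi> xb yb u"
  unfolding strongly_asymp_regular_dir_def
proof (intro allI impI)
  fix x y xs lk xstar ystar
  assume H: "(\<forall>k. (x k, y k) \<in> gph \<Phi> \<and> x k \<notin> inv_image_sv \<Phi> yb \<and> y k \<noteq> yb \<and>
            xs k \<in> reg_coderiv \<Phi> (x k) (y k) (lk k)) \<and>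
       x \<longlonglongrightarrow> xb \<and> y \<longlonglongrightarrow> yb \<and> xs \<longlonglongrightarrow> xstar \<and>
       (\<lambda>k. (x k - xb) /\<^sub>R norm (x k - xb)) \<longlonglongrightarrow> u \<and>
       (\<lambda>k. (y k - yb) /\<^sub>R norm (x k - xb)) \<longlonglongrightarrow> 0 \<and>
       (\<lambda>k. (norm (y k - yb) / norm (x k - xb)) *\<^sub>R lk k) \<longlonglongrightarrow> ystar \<and>
       filterlim (\<lambda>k. norm (lk k)) at_top sequentially \<and>
       (\<lambda>k. (y k - yb) /\<^sub>R norm (y k - yb) - lk k /\<^sub>R norm (lk k)) \<longlonglongrightarrow> 0"
  have fl: "filterlim (\<lambda>k. norm (lk k)) at_top sequentially" using H by blast
  have "eventually (\<lambda>k. 1 \<le> norm (lk k)) sequentially"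
    using fl unfolding filterlim_at_top by blast
  then obtain N where N: "\<And>k. k \<ge> N \<Longrightarrow> 1 \<le> norm (lk k)"
    unfolding eventually_sequentially by blast
  have xbS: "xb \<in> inv_image_sv \<Phi> yb" using gb unfolding gph_def inv_image_sv_def by simp
  define x' where "x' k = x (k + N)" for k
  define y' where "y' k = y (k + N)" for k
  define l' where "l' k = lk (k + N) /\<^sub>R norm (lk (k + N))" for k
  define e' where "e' k = xs (k + N) /\<^sub>R norm (lk (k + N))" for k
  have pos: "\<And>k. norm (lk (k + N)) > 0" using N by (meson le_add2 less_le_trans zero_less_one)
  have "\<not> quasi_normal_dir \<Phi> xb yb u E"
  proof (rule core_not_qn[OF fin, where x=x' and y=y' and \<eta>=e' and l=l'])
    fix k
    show "(x' k, y' k) \<in> gph \<Phi> \<and> x' k \<noteq> xb \<and> y' k \<noteq> yb"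
      using H xbS unfolding x'_def y'_def by metis
    have "xs (k + N) \<in> reg_coderiv \<Phi> (x (k + N)) (y (k + N)) (lk (k + N))" using H by blast
    then have "(xs (k + N), - lk (k + N)) \<in> reg_normal_cone (gph \<Phi>) (x (k + N), y (k + N))"
      unfolding reg_coderiv_def by simp
    then have "inverse (norm (lk (k + N))) *\<^sub>R (xs (k + N), - lk (k + N)) \<in> reg_normal_cone (gph \<Phi>) (x (k + N), y (k + N))"
      using pos[of k] by (intro reg_normal_scale) auto
    then show "e' k \<in> reg_coderiv \<Phi> (x' k) (y' k) (l' k) \<and> norm (l' k) = 1"
      using pos[of k] unfolding e'_def l'_def x'_def y'_def reg_coderiv_def
      by (simp add: divide_inverse_commute)
  next
    show "x' \<longlonglongrightarrow> xb" unfolding x'_def using H LIMSEQ_ignore_initial_segment by blast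
    show "y' \<longlonglongrightarrow> yb" unfolding y'_def using H LIMSEQ_ignore_initial_segment by blast
    have "(\<lambda>k. inverse (norm (lk k))) \<longlonglongrightarrow> 0" using H tendsto_inverse_0_at_top by blast
    then have "(\<lambda>k. inverse (norm (lk k)) *\<^sub>R xs k) \<longlonglongrightarrow> 0 *\<^sub>R xstar"
      using H by (intro tendsto_scaleR) auto
    then have "(\<lambda>k. inverse (norm (lk (k + N))) *\<^sub>R xs (k + N)) \<longlonglongrightarrow> 0"
      using LIMSEQ_ignore_initial_segment by fastforce
    then show "e' \<longlonglongrightarrow> 0" unfolding e'_def by (simp add: divide_inverse_commute)
    show "(\<lambda>k. (x' k - xb) /\<^sub>R norm (x' k - xb)) \<longlonglongrightarrow> u"
      unfolding x'_def using H LIMSEQ_ignore_initial_segment by fastforce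
    show "(\<lambda>k. (y' k - yb) /\<^sub>R norm (x' k - xb)) \<longlonglongrightarrow> 0"
      unfolding x'_def y'_def using H LIMSEQ_ignore_initial_segment by fastforce
    have "(\<lambda>k. - ((y (k + N) - yb) /\<^sub>R norm (y (k + N) - yb) - lk (k + N) /\<^sub>R norm (lk (k + N)))) \<longlonglongrightarrow> - 0"
      using H LIMSEQ_ignore_initial_segment by (intro tendsto_minus) fastforce
    then show "(\<lambda>k. l' k - (y' k - yb) /\<^sub>R norm (y' k - yb)) \<longlonglongrightarrow> 0"
      unfolding l'_def y'_def by simp
  qed
  then show "xstar \<in> Im_sv (dir_coderiv \<Phi> xb yb u 0)" using qn by blast
qed

lemma min_exists:
  fixes Q :: "('a::euclidean_space \<times> 'b::euclidean_space) set"
  assumes cQ: "closed Q" and q0: "(x, y0) \<in> Q" and bp: "\<beta> > 0"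
  shows "\<exists>x1 y1. (x1, y1) \<in> Q \<and>
     (\<forall>x2 y2. (x2, y2) \<in> Q \<longrightarrow> norm (y1 - yb) + \<beta> * (norm (x1 - x))\<^sup>2 \<le> norm (y2 - yb) + \<beta> * (norm (x2 - x))\<^sup>2) \<and>
     norm (y1 - yb) + \<beta> * (norm (x1 - x))\<^sup>2 \<le> norm (y0 - yb)"
proof -
  define f where "f p = norm (snd p - yb) + \<beta> * (norm (fst p - x))\<^sup>2" for p :: "'a \<times> 'b"
  define \<nu> where "\<nu> = norm (y0 - yb)"
  define K where "K = Q \<inter> {p. f p \<le> \<nu>}"
  have cf: "continuous_on UNIV f" unfolding f_def by (intro continuous_intros)
  have "closed {p. f p \<le> \<nu>}" by (rule closed_Collect_le[OF cf]) (intro continuous_intros)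
  then have clK: "closed K" unfolding K_def using cQ by (intro closed_Int)
  have "K \<subseteq> cball x (1 + \<nu> / \<beta>) \<times> cball yb \<nu>"
  proof
    fix p assume pK: "p \<in> K"
    obtain a b where p: "p = (a, b)" by fastforce
    have fp: "norm (b - yb) + \<beta> * (norm (a - x))\<^sup>2 \<le> \<nu>" using pK unfolding K_def f_def p by simp
    have nb: "norm (b - yb) \<le> \<nu>" using fp bp by (smt (verit) mult_nonneg_nonneg zero_le_power2)
    have "\<beta> * (norm (a - x))\<^sup>2 \<le> \<nu>" using fp norm_ge_zero[of "b - yb"] by linarith
    then have sq: "(norm (a - x))\<^sup>2 \<le> \<nu> / \<beta>" using bp by (simp add: le_divide_eq mult.commute)
    have "norm (a - x) \<le> 1 + \<nu> / \<beta>"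
    proof (cases "norm (a - x) \<le> 1")
      case True then show ?thesis using sq bp by (smt (verit) zero_le_power2)
    next
      case False
      then have "norm (a - x) * 1 \<le> norm (a - x) * norm (a - x)"
        by (intro mult_left_mono) auto
      then have "norm (a - x) \<le> (norm (a - x))\<^sup>2" by (simp add: power2_eq_square)
      then show ?thesis using sq by simp
    qed
    then show "p \<in> cball x (1 + \<nu> / \<beta>) \<times> cball yb \<nu>"
      using nb unfolding p by (simp add: dist_norm norm_minus_commute)
  qed
  then have bK: "bounded K" by (rule bounded_subset[rotated]) (intro bounded_Times bounded_cball)
  have x0K: "(x, y0) \<in> K" unfolding K_def f_def \<nu>_def using q0 by simp
  obtain p where pK: "p \<in> K" and pmin: "\<forall>q\<in>K. f p \<le> f q"
    using continuous_attains_inf[of K f] clK bK x0K cf compact_eq_bounded_closed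
      continuous_on_subset[OF cf] by blast
  obtain x1 y1 where p: "p = (x1, y1)" by fastforce
  have fpn: "f p \<le> \<nu>" using pK unfolding K_def by simp
  show ?thesis
  proof (intro exI conjI allI impI)
    show "(x1, y1) \<in> Q" using pK p unfolding K_def by simp
    fix x2 y2 assume q: "(x2, y2) \<in> Q"
    have "f p \<le> f (x2, y2)"
    proof (cases "f (x2, y2) \<le> \<nu>")
      case True then show ?thesis using pmin q unfolding K_def by simp
    next
      case False then show ?thesis using fpn by simp
    qed
    then show "norm (y1 - yb) + \<beta> * (norm (x1 - x))\<^sup>2 \<le> norm (y2 - yb) + \<beta> * (norm (x2 - x))\<^sup>2"
      unfolding f_def p by simp
  next
    show "norm (y1 - yb) + \<beta> * (norm (x1 - x))\<^sup>2 \<le> norm (y0 - yb)"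
      using fpn unfolding f_def p \<nu>_def by simp
  qed
qed

lemma norm_add_sq:
  fixes p q :: "'a::real_inner"
  shows "(norm (p + q))\<^sup>2 = (norm p)\<^sup>2 + 2 * (p \<bullet> q) + (norm q)\<^sup>2"
  by (simp add: power2_norm_eq_inner inner_add inner_commute algebra_simps)

lemma normal_min:
  fixes Q :: "('a::euclidean_space \<times> 'b::euclidean_space) set"
  assumes z: "(x1, y1) \<in> Q" and yne: "y1 \<noteq> yb" and bp: "\<beta> \<ge> 0"
    and mn: "\<And>x2 y2. (x2, y2) \<in> Q \<Longrightarrow> norm (y1 - yb) + \<beta> * (norm (x1 - x))\<^sup>2 \<le> norm (y2 - yb) + \<beta> * (norm (x2 - x))\<^sup>2"
  shows "(- (2 * \<beta>) *\<^sub>R (x1 - x), - ((y1 - yb) /\<^sub>R norm (y1 - yb))) \<in> reg_normal_cone Q (x1, y1)"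
proof -
  define a where "a = y1 - yb"
  define na where "na = norm a"
  have nap: "na > 0" using yne unfolding na_def a_def by simp
  show ?thesis
  proof (rule reg_normal_quad[OF z, where C = "1 / (2 * na) + \<beta>"])
    show "0 \<le> 1 / (2 * na) + \<beta>" using nap bp by simp
    fix z' assume z': "z' \<in> Q"
    obtain x2 y2 where zz: "z' = (x2, y2)" by fastforce
    define b where "b = y2 - yb"
    define hx where "hx = x2 - x1"
    define hy where "hy = y2 - y1"
    have hyab: "hy = b - a" unfolding hy_def a_def b_def by simp
    have m: "na + \<beta> * (norm (x1 - x))\<^sup>2 \<le> norm b + \<beta> * (norm (x2 - x))\<^sup>2"
      using mn[of x2 y2] z' zz unfolding na_def a_def b_def by simp
    have ex: "(norm (x2 - x))\<^sup>2 = (norm (x1 - x))\<^sup>2 + 2 * ((x1 - x) \<bullet> hx) + (norm hx)\<^sup>2"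
      using norm_add_sq[of "x1 - x" hx] unfolding hx_def by simp
    have t1: "- (2 * \<beta>) * ((x1 - x) \<bullet> hx) \<le> \<beta> * (norm hx)\<^sup>2 + norm b - na"
      using m ex by (simp add: algebra_simps)
    have nb2: "(norm (b - a))\<^sup>2 = (norm b)\<^sup>2 - 2 * (a \<bullet> b) + na\<^sup>2"
      using norm_add_sq[of b "- a"] unfolding na_def by (simp add: inner_commute)
    have h2: "(norm hy)\<^sup>2 = (norm b)\<^sup>2 - 2 * (a \<bullet> b) + na\<^sup>2" using nb2 hyab by simp
    have "0 \<le> (norm b - na)\<^sup>2" by simp
    moreover have "(norm b - na)\<^sup>2 = (norm b)\<^sup>2 - 2 * (norm b * na) + na\<^sup>2"
      by (simp add: power2_diff)
    ultimately have cs: "norm b * na - a \<bullet> b \<le> (norm hy)\<^sup>2 / 2"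
      using h2 by linarith
    have cs2: "norm b - (a \<bullet> b) / na \<le> (norm hy)\<^sup>2 / (2 * na)"
    proof -
      have "norm b - (a \<bullet> b) / na = (norm b * na - a \<bullet> b) / na" using nap by (simp add: field_simps)
      also have "\<dots> \<le> ((norm hy)\<^sup>2 / 2) / na" using cs nap by (intro divide_right_mono) auto
      finally show ?thesis by simp
    qed
    have aa: "a \<bullet> a = na\<^sup>2" unfolding na_def by (simp add: power2_norm_eq_inner)
    have t2: "(- (a /\<^sub>R na)) \<bullet> hy = na - (a \<bullet> b) / na"
      using nap aa unfolding hyab by (simp add: inner_diff_right field_simps power2_eq_square)
    have nz: "(norm (z' - (x1, y1)))\<^sup>2 = (norm hx)\<^sup>2 + (norm hy)\<^sup>2"
      unfolding zz hx_def hy_def by (simp add: norm_Pair)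
    have "(- (2 * \<beta>) *\<^sub>R (x1 - x), - ((y1 - yb) /\<^sub>R norm (y1 - yb))) \<bullet> (z' - (x1, y1))
        = - (2 * \<beta>) * ((x1 - x) \<bullet> hx) + (- (a /\<^sub>R na)) \<bullet> hy"
      unfolding zz hx_def hy_def a_def na_def by simp
    also have "\<dots> \<le> \<beta> * (norm hx)\<^sup>2 + (norm hy)\<^sup>2 / (2 * na)"
      using t1 t2 cs2 by simp
    also have "\<dots> \<le> (1 / (2 * na) + \<beta>) * ((norm hx)\<^sup>2 + (norm hy)\<^sup>2)"
      using nap bp by (simp add: algebra_simps)
    finally show "(- (2 * \<beta>) *\<^sub>R (x1 - x), - ((y1 - yb) /\<^sub>R norm (y1 - yb))) \<bullet> (z' - (x1, y1))
        \<le> (1 / (2 * na) + \<beta>) * (norm (z' - (x1, y1)))\<^sup>2" using nz by simp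
  qed
qed

lemma step_ms:
  fixes \<Phi> :: "'a::euclidean_space \<Rightarrow> 'b::euclidean_space set"
  assumes cl: "closed (gph \<Phi>)" and gb: "(xb, yb) \<in> gph \<Phi>" and nu: "norm u = 1"
    and m4: "m \<ge> 4"
    and xin: "x \<in> (\<lambda>w. xb + w) ` dir_nbhd (1 / m) (1 / m) u"
    and ne: "\<Phi> x \<noteq> {}"
    and bad: "infdist x (inv_image_sv \<Phi> yb) > m * infdist yb (\<Phi> x)"
  shows "\<exists>x' y' \<eta>. (x', y') \<in> gph \<Phi> \<and> x' \<noteq> xb \<and> y' \<noteq> yb \<and>
     \<eta> \<in> reg_coderiv \<Phi> x' y' ((y' - yb) /\<^sub>R norm (y' - yb)) \<and>
     norm \<eta> \<le> 6 / sqrt m \<and> norm (x' - xb) \<le> 6 / sqrt m \<and> norm (y' - yb) \<le> 6 / sqrt m \<and>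
     norm ((x' - xb) /\<^sub>R norm (x' - xb) - u) \<le> 6 / sqrt m \<and>
     norm ((y' - yb) /\<^sub>R norm (x' - xb)) \<le> 6 / sqrt m"
proof -
  define S where "S = inv_image_sv \<Phi> yb"
  obtain w where w: "w \<in> dir_nbhd (1 / m) (1 / m) u" and xw: "x = xb + w" using xin by blast
  define t where "t = norm w"
  have mpos [simp]: "m > 0" using m4 by simp
  have sm2: "sqrt m \<ge> 2" using real_sqrt_le_mono[OF m4] by simp
  have m0 [simp]: "0 \<le> m" using m4 by linarith
  have smp [simp]: "0 < sqrt m" using m4 by simp
  have smm: "sqrt m \<le> m"
  proof -
    have "sqrt m * 1 \<le> sqrt m * sqrt m" using sm2 m4 by (intro mult_left_mono) auto
    then show ?thesis using mpos by simp
  qed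
  have wdir: "norm (t *\<^sub>R u - w) \<le> t / m" and tm: "t \<le> 1 / m"
    using w nu unfolding dir_nbhd_def t_def by auto
  have xbS: "xb \<in> S" using gb unfolding S_def gph_def inv_image_sv_def by simp
  have clx: "closed (\<Phi> x)"
  proof -
    have "\<Phi> x = Pair x -` gph \<Phi>" unfolding gph_def by auto
    then show ?thesis using cl by (simp add: continuous_closed_vimage)
  qed
  obtain y0 where y0: "y0 \<in> \<Phi> x" and y0m: "\<And>y. y \<in> \<Phi> x \<Longrightarrow> dist yb y0 \<le> dist yb y"
    using distance_attains_inf[OF clx ne] by blast
  define \<nu> where "\<nu> = norm (y0 - yb)"
  have "\<nu> \<le> infdist yb (\<Phi> x)"
    unfolding infdist_def using ne y0m
    by (simp add: \<nu>_def dist_norm norm_minus_commute cINF_greatest)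
  define d where "d = infdist x S"
  have "m * \<nu> \<le> m * infdist yb (\<Phi> x)" using \<open>\<nu> \<le> _\<close> mpos by (intro mult_left_mono) auto
  then have dnu: "d > m * \<nu>"
    using bad unfolding d_def S_def by linarith
  have nu0: "\<nu> \<ge> 0" unfolding \<nu>_def by simp
  have "m * \<nu> \<ge> 0" using nu0 mpos by simp
  then have dpos: "d > 0" using dnu by linarith
  have nupos: "\<nu> > 0"
  proof (rule ccontr)
    assume "\<not> \<nu> > 0"
    then have "y0 = yb" using nu0 unfolding \<nu>_def by simp
    then have "x \<in> S" using y0 unfolding S_def inv_image_sv_def by simp
    then show False using dpos unfolding d_def by (simp add: infdist_zero)
  qed
  have dt: "d \<le> t" using infdist_le[OF xbS, of x] unfolding d_def t_def xw by (simp add: dist_norm)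
  define \<beta> where "\<beta> = m * \<nu> / d\<^sup>2"
  have bpos: "\<beta> > 0" unfolding \<beta>_def using mpos nupos dpos by simp
  have q0: "(x, y0) \<in> gph \<Phi>" using y0 unfolding gph_def by simp
  obtain x1 y1 where z1: "(x1, y1) \<in> gph \<Phi>"
    and mn: "\<forall>x2 y2. (x2, y2) \<in> gph \<Phi> \<longrightarrow> norm (y1 - yb) + \<beta> * (norm (x1 - x))\<^sup>2 \<le> norm (y2 - yb) + \<beta> * (norm (x2 - x))\<^sup>2"
    and F: "norm (y1 - yb) + \<beta> * (norm (x1 - x))\<^sup>2 \<le> \<nu>"
    using min_exists[OF cl q0 bpos, of yb] unfolding \<nu>_def by blast
  have bd2: "\<beta> * d\<^sup>2 = m * \<nu>" unfolding \<beta>_def using dpos by simp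
  have y1ne: "y1 \<noteq> yb"
  proof
    assume "y1 = yb"
    then have "x1 \<in> S" using z1 unfolding S_def gph_def inv_image_sv_def by simp
    then have "d \<le> norm (x1 - x)" using infdist_le[of x1 S x] unfolding d_def by (simp add: dist_norm norm_minus_commute)
    then have "d\<^sup>2 \<le> (norm (x1 - x))\<^sup>2" using dpos by (intro power_mono) auto
    then have "\<beta> * d\<^sup>2 \<le> \<beta> * (norm (x1 - x))\<^sup>2" using bpos by (intro mult_left_mono) auto
    then have "m * \<nu> \<le> \<nu>" using F bd2 \<open>y1 = yb\<close> by simp
    moreover have "4 * \<nu> \<le> m * \<nu>" using m4 nupos by (intro mult_right_mono) auto
    ultimately show False using nupos by linarith
  qed
  define r where "r = norm (x1 - x)"
  have "\<beta> * r\<^sup>2 \<le> \<nu>" using F norm_ge_zero[of "y1 - yb"] unfolding r_def by linarith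
  then have r2: "r\<^sup>2 \<le> \<nu> / \<beta>" using bpos by (simp add: le_divide_eq mult.commute)
  have e2: "\<nu> / \<beta> = (d / sqrt m)\<^sup>2" unfolding \<beta>_def using mpos nupos dpos
    by (simp add: power_divide)
  have "r\<^sup>2 \<le> (d / sqrt m)\<^sup>2" using r2 e2 by linarith
  moreover have "0 \<le> d / sqrt m" using dpos mpos by simp
  ultimately have rd: "r \<le> d / sqrt m" by (rule power2_le_imp_le)
  have r0: "r \<ge> 0" unfolding r_def by simp
  have "\<beta> * (norm (x1 - x))\<^sup>2 \<ge> 0" using bpos by simp
  then have na: "norm (y1 - yb) \<le> \<nu>" using F by linarith
  define \<eta> where "\<eta> = - (2 * \<beta>) *\<^sub>R (x1 - x)"
  have eta_mem: "\<eta> \<in> reg_coderiv \<Phi> x1 y1 ((y1 - yb) /\<^sub>R norm (y1 - yb))"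
    unfolding reg_coderiv_def \<eta>_def
    using normal_min[OF z1 y1ne, of \<beta> x] mn bpos by simp
  have neta: "norm \<eta> = 2 * \<beta> * r" unfolding \<eta>_def r_def using bpos by simp
  have "2 * \<beta> * r \<le> 2 * \<beta> * (d / sqrt m)" using rd bpos by (intro mult_left_mono) auto
  also have "\<dots> = 2 * ((m * \<nu>) / d) / sqrt m" unfolding \<beta>_def using dpos by (simp add: power2_eq_square)
  also have "\<dots> \<le> 2 * 1 / sqrt m"
  proof -
    have "(m * \<nu>) / d \<le> 1" using dnu dpos by simp
    then show ?thesis using sm2 mpos by (intro divide_right_mono) auto
  qed
  finally have eta_b: "norm \<eta> \<le> 2 / sqrt m" using neta by simp
  define v where "v = x1 - xb"
  have vwr: "v = w + (x1 - x)" unfolding v_def xw by simp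
  have "d / sqrt m \<le> t / sqrt m" using dt sm2 by (intro divide_right_mono) auto
  then have rt: "r \<le> t / sqrt m" using rd by linarith
  have rt2: "r \<le> t / 2"
  proof -
    have "t / sqrt m \<le> t / 2" using sm2 dt dpos by (intro divide_left_mono) auto
    then show ?thesis using rt by linarith
  qed
  have tpos: "t > 0" using dt dpos by simp
  have nv_lo: "norm v \<ge> t / 2"
  proof -
    have wv: "w = v - (x1 - x)" using vwr by simp
    have "t \<le> norm v + r" unfolding t_def r_def wv
      by (rule norm_triangle_ineq4)
    then show ?thesis using rt2 by linarith
  qed
  have nv_hi: "norm v \<le> t + r" unfolding t_def r_def vwr by (rule norm_triangle_ineq)
  have vpos: "norm v > 0" using nv_lo tpos by linarith
  have ttr: "\<bar>t - norm v\<bar> \<le> r" unfolding t_def r_def vwr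
    using norm_triangle_ineq3[of w "w + (x1 - x)"] by (simp add: norm_minus_commute)
  have "v - norm v *\<^sub>R u = - (t *\<^sub>R u - w) + (x1 - x) + (t - norm v) *\<^sub>R u"
    unfolding vwr by (simp add: algebra_simps)
  moreover have "norm (- (t *\<^sub>R u - w) + (x1 - x) + (t - norm v) *\<^sub>R u)
      \<le> norm (- (t *\<^sub>R u - w)) + norm (x1 - x) + norm ((t - norm v) *\<^sub>R u)"
    using norm_triangle_ineq[of "- (t *\<^sub>R u - w) + (x1 - x)" "(t - norm v) *\<^sub>R u"]
      norm_triangle_ineq[of "- (t *\<^sub>R u - w)" "x1 - x"] by linarith
  ultimately have "norm (v - norm v *\<^sub>R u) \<le> norm (t *\<^sub>R u - w) + r + \<bar>t - norm v\<bar>"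
    unfolding r_def using nu by (simp add: norm_minus_commute)
  also have "\<dots> \<le> t / m + 2 * r" using wdir ttr by linarith
  also have "\<dots> \<le> t / sqrt m + 2 * (t / sqrt m)"
  proof -
    have "t / m \<le> t / sqrt m" using smm sm2 tpos by (intro divide_left_mono) auto
    then show ?thesis using rt by linarith
  qed
  also have "\<dots> = 3 * t / sqrt m" by simp
  also have "\<dots> \<le> 6 * norm v / sqrt m" using nv_lo sm2 mpos by (intro divide_right_mono) auto
  finally have dirb: "norm (v - norm v *\<^sub>R u) \<le> 6 * norm v / sqrt m" .
  have "v /\<^sub>R norm v - u = (1 / norm v) *\<^sub>R (v - norm v *\<^sub>R u)" using vpos by (simp add: algebra_simps divide_inverse)
  then have "norm (v /\<^sub>R norm v - u) = norm (v - norm v *\<^sub>R u) / norm v" by simp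
  also have "\<dots> \<le> (6 * norm v / sqrt m) / norm v" using dirb vpos mpos by (intro divide_right_mono) auto
  also have "\<dots> = 6 / sqrt m" using vpos by simp
  finally have dir_final: "norm (v /\<^sub>R norm v - u) \<le> 6 / sqrt m" .
  have tsm: "t \<le> 1 / sqrt m"
  proof -
    have "1 / m \<le> 1 / sqrt m" using smm sm2 by (intro divide_left_mono) auto
    then show ?thesis using tm by linarith
  qed
  have nvb: "norm v \<le> 6 / sqrt m"
  proof -
    have "norm v \<le> 2 * t" using nv_hi rt2 tpos by linarith
    also have "\<dots> \<le> 2 / sqrt m" using tsm by linarith
    also have "\<dots> \<le> 6 / sqrt m" using sm2 mpos by (intro divide_right_mono) auto
    finally show ?thesis .
  qed
  have ya: "norm (y1 - yb) \<le> t / m"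
  proof -
    have "\<nu> \<le> d / m" using dnu mpos by (simp add: field_simps)
    also have "\<dots> \<le> t / m" using dt mpos by (simp add: divide_right_mono)
    finally show ?thesis using na by linarith
  qed
  have tm2: "t / m \<le> 2 * norm v / sqrt m"
  proof -
    have "t / m \<le> t / sqrt m" using smm sm2 tpos by (intro divide_left_mono) auto
    also have "\<dots> \<le> 2 * norm v / sqrt m" using nv_lo sm2 mpos by (intro divide_right_mono) auto
    finally show ?thesis .
  qed
  have yb1: "norm (y1 - yb) \<le> 6 / sqrt m"
  proof -
    have "1 / m \<le> 1 / 4" using m4 by (intro divide_left_mono) auto
    then have "norm v \<le> 1" using nv_hi rt2 tm by linarith
    then have "2 * norm v / sqrt m \<le> 2 / sqrt m" using sm2 mpos by (intro divide_right_mono) auto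
    also have "\<dots> \<le> 6 / sqrt m" using sm2 mpos by (intro divide_right_mono) auto
    finally show ?thesis using ya tm2 by linarith
  qed
  have yb2: "norm ((y1 - yb) /\<^sub>R norm v) \<le> 6 / sqrt m"
  proof -
    have "norm ((y1 - yb) /\<^sub>R norm v) = norm (y1 - yb) / norm v" by (simp add: divide_inverse mult.commute)
    also have "\<dots> \<le> (2 * norm v / sqrt m) / norm v" using ya tm2 vpos by (intro divide_right_mono) auto
    also have "\<dots> = 2 / sqrt m" using vpos by simp
    also have "\<dots> \<le> 6 / sqrt m" using sm2 mpos by (intro divide_right_mono) auto
    finally show ?thesis .
  qed
  show ?thesis
  proof (intro exI conjI)
    show "(x1, y1) \<in> gph \<Phi>" by fact
    show "x1 \<noteq> xb" using vpos unfolding v_def by auto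
    show "y1 \<noteq> yb" by fact
    show "\<eta> \<in> reg_coderiv \<Phi> x1 y1 ((y1 - yb) /\<^sub>R norm (y1 - yb))" by fact
    have "2 / sqrt m \<le> 6 / sqrt m" using sm2 mpos by (intro divide_right_mono) auto
    then show "norm \<eta> \<le> 6 / sqrt m" using eta_b by linarith
    show "norm (x1 - xb) \<le> 6 / sqrt m" using nvb unfolding v_def .
    show "norm (y1 - yb) \<le> 6 / sqrt m" by fact
    show "norm ((x1 - xb) /\<^sub>R norm (x1 - xb) - u) \<le> 6 / sqrt m" using dir_final unfolding v_def .
    show "norm ((y1 - yb) /\<^sub>R norm (x1 - xb)) \<le> 6 / sqrt m" using yb2 unfolding v_def .
  qed
qed

lemma ms_part:
  fixes \<Phi> :: "'a::euclidean_space \<Rightarrow> 'b::euclidean_space set"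
  assumes cl: "closed (gph \<Phi>)" and gb: "(xb, yb) \<in> gph \<Phi>" and nu: "norm u = 1"
    and fin: "finite E" and qn: "quasi_normal_dir \<Phi> xb yb u E"
  shows "metric_subregular_dir \<Phi> xb yb u"
proof (rule ccontr)
  assume nms: "\<not> metric_subregular_dir \<Phi> xb yb u"
  define mm where "mm k = real k + 4" for k :: nat
  have ex: "\<forall>k. \<exists>x. x \<in> (\<lambda>w. xb + w) ` dir_nbhd (1 / mm k) (1 / mm k) u \<and> \<Phi> x \<noteq> {} \<and>
      infdist x (inv_image_sv \<Phi> yb) > mm k * infdist yb (\<Phi> x)"
  proof
    fix k
    show "\<exists>x. x \<in> (\<lambda>w. xb + w) ` dir_nbhd (1 / mm k) (1 / mm k) u \<and> \<Phi> x \<noteq> {} \<and>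
      infdist x (inv_image_sv \<Phi> yb) > mm k * infdist yb (\<Phi> x)"
    proof (rule ccontr)
      assume "\<not> ?thesis"
      then have H: "\<forall>x. x \<in> (\<lambda>w. xb + w) ` dir_nbhd (1 / mm k) (1 / mm k) u \<longrightarrow> \<Phi> x \<noteq> {} \<longrightarrow>
          infdist x (inv_image_sv \<Phi> yb) \<le> mm k * infdist yb (\<Phi> x)"
        by (auto simp: not_less)
      have "mm k > 0" unfolding mm_def by simp
      then have "metric_subregular_dir \<Phi> xb yb u"
        unfolding metric_subregular_dir_def using H
        by (intro exI[of _ "1 / mm k"] exI[of _ "mm k"] conjI) auto
      then show False using nms by blast
    qed
  qed
  then obtain X where X: "\<And>k. X k \<in> (\<lambda>w. xb + w) ` dir_nbhd (1 / mm k) (1 / mm k) u \<and> \<Phi> (X k) \<noteq> {} \<and>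
      infdist (X k) (inv_image_sv \<Phi> yb) > mm k * infdist yb (\<Phi> (X k))"
    by metis
  have "\<forall>k. \<exists>x' y' \<eta>. (x', y') \<in> gph \<Phi> \<and> x' \<noteq> xb \<and> y' \<noteq> yb \<and>
     \<eta> \<in> reg_coderiv \<Phi> x' y' ((y' - yb) /\<^sub>R norm (y' - yb)) \<and>
     norm \<eta> \<le> 6 / sqrt (mm k) \<and> norm (x' - xb) \<le> 6 / sqrt (mm k) \<and> norm (y' - yb) \<le> 6 / sqrt (mm k) \<and>
     norm ((x' - xb) /\<^sub>R norm (x' - xb) - u) \<le> 6 / sqrt (mm k) \<and>
     norm ((y' - yb) /\<^sub>R norm (x' - xb)) \<le> 6 / sqrt (mm k)"
  proof
    fix k
    have "mm k \<ge> 4" unfolding mm_def by simp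
    then show "\<exists>x' y' \<eta>. (x', y') \<in> gph \<Phi> \<and> x' \<noteq> xb \<and> y' \<noteq> yb \<and>
     \<eta> \<in> reg_coderiv \<Phi> x' y' ((y' - yb) /\<^sub>R norm (y' - yb)) \<and>
     norm \<eta> \<le> 6 / sqrt (mm k) \<and> norm (x' - xb) \<le> 6 / sqrt (mm k) \<and> norm (y' - yb) \<le> 6 / sqrt (mm k) \<and>
     norm ((x' - xb) /\<^sub>R norm (x' - xb) - u) \<le> 6 / sqrt (mm k) \<and>
     norm ((y' - yb) /\<^sub>R norm (x' - xb)) \<le> 6 / sqrt (mm k)"
      using step_ms[OF cl gb nu _ _ _ _] X[of k] by blast
  qed
  then obtain X' Y' H where P: "\<And>k. (X' k, Y' k) \<in> gph \<Phi> \<and> X' k \<noteq> xb \<and> Y' k \<noteq> yb \<and>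
     H k \<in> reg_coderiv \<Phi> (X' k) (Y' k) ((Y' k - yb) /\<^sub>R norm (Y' k - yb)) \<and>
     norm (H k) \<le> 6 / sqrt (mm k) \<and> norm (X' k - xb) \<le> 6 / sqrt (mm k) \<and> norm (Y' k - yb) \<le> 6 / sqrt (mm k) \<and>
     norm ((X' k - xb) /\<^sub>R norm (X' k - xb) - u) \<le> 6 / sqrt (mm k) \<and>
     norm ((Y' k - yb) /\<^sub>R norm (X' k - xb)) \<le> 6 / sqrt (mm k)"
    by metis
  have g0: "(\<lambda>k. 6 / sqrt (mm k)) \<longlonglongrightarrow> 0" unfolding mm_def by real_asymp
  have "\<not> quasi_normal_dir \<Phi> xb yb u E"
  proof (rule core_not_qn[OF fin, where x=X' and y=Y' and \<eta>=H and l="\<lambda>k. (Y' k - yb) /\<^sub>R norm (Y' k - yb)"])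
    fix k
    show "(X' k, Y' k) \<in> gph \<Phi> \<and> X' k \<noteq> xb \<and> Y' k \<noteq> yb" using P by blast
    show "H k \<in> reg_coderiv \<Phi> (X' k) (Y' k) ((Y' k - yb) /\<^sub>R norm (Y' k - yb)) \<and>
      norm ((Y' k - yb) /\<^sub>R norm (Y' k - yb)) = 1" using P[of k] by simp
  next
    show "X' \<longlonglongrightarrow> xb" by (rule bound_conv[OF _ g0]) (use P in blast)
    show "Y' \<longlonglongrightarrow> yb" by (rule bound_conv[OF _ g0]) (use P in blast)
    show "H \<longlonglongrightarrow> 0" by (rule bound_conv[OF _ g0]) (use P in simp)
    show "(\<lambda>k. (X' k - xb) /\<^sub>R norm (X' k - xb)) \<longlonglongrightarrow> u" by (rule bound_conv[OF _ g0]) (use P in blast)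
    show "(\<lambda>k. (Y' k - yb) /\<^sub>R norm (X' k - xb)) \<longlonglongrightarrow> 0" by (rule bound_conv[OF _ g0]) (use P in simp)
    show "(\<lambda>k. (Y' k - yb) /\<^sub>R norm (Y' k - yb) - (Y' k - yb) /\<^sub>R norm (Y' k - yb)) \<longlonglongrightarrow> 0" by simp
  qed
  then show False using qn by blast
qed

theorem theorem5p12:
  fixes \<Phi> :: "'a::euclidean_space \<Rightarrow> 'b::euclidean_space set"
    and xb :: 'a and yb :: 'b and u :: 'a and E :: "'b set"
  assumes "closed (gph \<Phi>)"
    and "(xb, yb) \<in> gph \<Phi>"
    and "norm u = 1"
    and "orthonormal_basis E"
    and "quasi_normal_dir \<Phi> xb yb u E"
  shows "strongly_asymp_regular_dir \<Phi> xb yb u \<and> metric_subregular_dir \<Phi> xb yb u"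
proof -
  have fin: "finite E" using assms(4) unfolding orthonormal_basis_def by blast
  show ?thesis using sar_part[OF assms(2) fin assms(5)] ms_part[OF assms(1,2,3) fin assms(5)] by blast
qed

end
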